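(* Assume the total harvested energy is finite, so that problem (P) below has an optimal solution. Then there exists an optimal solution $\{p_{k,i},\delta_{k,i}\}$ of (P) that is a procrastinating policy, i.e. it satisfies $$p_{k,i}-\alpha_j\delta_{j,i}\ge 0\quad\text{for all } j,k\in\{1,2\},\ j\neq k,\ i=1,\dots,N.$$
   Context: Two-way channel setting. There are two nodes $T_1,T_2$ and $N$ time slots of unit length. The fixed parameters are channel power gains $h_1,h_2>0$, noise powers $\sigma_1^2,\sigma_2^2>0$, energy transfer efficiencies $\alpha_1,\alpha_2\in[0,1]$, and harvested energies $E_{k,i}\ge 0$ ($k=1,2$, $i=1,\dots,N$). A power policy is a collection $\{p_{k,i},\delta_{k,i}\}_{k=1,2;\,i=1,\dots,N}$. Here $p_{k,i}$ is the transmit power (energy) of $T_k$ in slot $i$, and $\delta_{k,i}$ is the energy sent by $T_k$ to the other node $T_j$ ($j\neq k$) in slot $i$, of which $T_j$ receives $\alpha_k\delta_{k,i}$. With infinite batteries the battery state is $$S_{k,i}=\sum_{n=1}^{i}\big(E_{k,n}-p_{k,n}+\alpha_j\delta_{j,n}-\delta_{k,n}\big),\qquad j\neq k.$$ Let $$C(p_1,p_2)=\tfrac12\log\!\Big(1+\tfrac{h_1p_1}{\sigma_2^2}\Big)+\tfrac12\log\!\Big(1+\tfrac{h_2p_2}{\sigma_1^2}\Big).$$ Problem (P) is to maximize $\sum_{i=1}^N C(p_{1,i},p_{2,i})$ over all power policies, subject to $S_{k,i}\ge 0$, $p_{k,i}\ge0$ and $\delta_{k,i}\ge 0$ for all $k=1,2$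 and $i=1,\dots,N$. *)

theory Defs
  imports Complex_Main
begin

text \<open>A policy is a pair of functions p, d :: nat => nat => real with p k i, d k i the
  transmit power and the transferred energy of node k in slot i.\<close>

definition other :: "nat \<Rightarrow> nat" where
  "other k = (if k = 1 then 2 else 1)"

definition battery ::
  "(nat \<Rightarrow> real) \<Rightarrow> (nat \<Rightarrow> nat \<Rightarrow> real) \<Rightarrow>
   (nat \<Rightarrow> nat \<Rightarrow> real) \<Rightarrow> (nat \<Rightarrow> nat \<Rightarrow> real) \<Rightarrow> nat \<Rightarrow> nat \<Rightarrow> real" where
  "battery alpha E p d k i =
     (\<Sum>n=1..i. E k n - p k n + alpha (other k) * d (other k) n - d k n)"

definition rate :: "real \<Rightarrow> real \<Rightarrow> real \<Rightarrow> real \<Rightarrow> real \<Rightarrow> real \<Rightarrow> real" where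
  "rate h1 h2 s1 s2 p1 p2 =
     (1/2) * ln (1 + h1 * p1 / s2) + (1/2) * ln (1 + h2 * p2 / s1)"

definition feasible ::
  "nat \<Rightarrow> (nat \<Rightarrow> real) \<Rightarrow> (nat \<Rightarrow> nat \<Rightarrow> real) \<Rightarrow>
   (nat \<Rightarrow> nat \<Rightarrow> real) \<Rightarrow> (nat \<Rightarrow> nat \<Rightarrow> real) \<Rightarrow> bool" where
  "feasible N alpha E p d \<longleftrightarrow>
     (\<forall>k\<in>{1,2}. \<forall>i\<in>{1..N}.
        battery alpha E p d k i \<ge> 0 \<and> p k i \<ge> 0 \<and> d k i \<ge> 0)"

definition objective ::
  "nat \<Rightarrow> real \<Rightarrow> real \<Rightarrow> real \<Rightarrow> real \<Rightarrow> (nat \<Rightarrow> nat \<Rightarrow> real) \<Rightarrow> real" where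
  "objective N h1 h2 s1 s2 p = (\<Sum>i=1..N. rate h1 h2 s1 s2 (p 1 i) (p 2 i))"

definition optimal ::
  "nat \<Rightarrow> real \<Rightarrow> real \<Rightarrow> real \<Rightarrow> real \<Rightarrow> (nat \<Rightarrow> real) \<Rightarrow> (nat \<Rightarrow> nat \<Rightarrow> real) \<Rightarrow>
   (nat \<Rightarrow> nat \<Rightarrow> real) \<Rightarrow> (nat \<Rightarrow> nat \<Rightarrow> real) \<Rightarrow> bool" where
  "optimal N h1 h2 s1 s2 alpha E p d \<longleftrightarrow>
     feasible N alpha E p d \<and>
     (\<forall>q e. feasible N alpha E q e \<longrightarrow>
        objective N h1 h2 s1 s2 q \<le> objective N h1 h2 s1 s2 p)"

definition procrastinating ::
  "nat \<Rightarrow> (nat \<Rightarrow> real) \<Rightarrow> (nat \<Rightarrow> nat \<Rightarrow> real) \<Rightarrow> (nat \<Rightarrow> nat \<Rightarrow> real) \<Rightarrow> bool" where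
  "procrastinating N alpha p d \<longleftrightarrow>
     (\<forall>k\<in>{1,2}. \<forall>j\<in>{1,2}. j \<noteq> k \<longrightarrow>
        (\<forall>i\<in>{1..N}. p k i - alpha j * d j i \<ge> 0))"

end

theory Submission imports Defs "HOL-Analysis.Analysis" begin

lemma compact_PiE_UNIV:
  fixes K :: "'a \<Rightarrow> ('b::topological_space) set"
  assumes "\<And>i. compact (K i)"
  shows "compact (PiE UNIV K)"
  using compactin_PiE[of "\<lambda>i. euclidean" UNIV K] assms
  by (simp add: euclidean_product_topology)

definition pbox :: "nat \<Rightarrow> real \<Rightarrow> (nat \<Rightarrow> nat \<Rightarrow> real) set" where
  "pbox N M = PiE UNIV (\<lambda>k. PiE UNIV (\<lambda>i. if k \<in> {1,2} \<and> i \<in> {1..N} then {0..M} else {0}))"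

lemma compact_box: "compact (pbox N M)"
  unfolding pbox_def
  by (intro compact_PiE_UNIV) auto

lemma cont_coord: "continuous_on S (\<lambda>f::nat\<Rightarrow>nat\<Rightarrow>real. f k i)"
  by (metis continuous_on_product_coordinates continuous_on_product_then_coordinatewise continuous_on_subset subset_UNIV)

lemma cont_fst: "continuous_on S (\<lambda>x::(nat\<Rightarrow>nat\<Rightarrow>real)\<times>(nat\<Rightarrow>nat\<Rightarrow>real). fst x k i)"
  using continuous_on_compose2[OF cont_coord[of UNIV k i] continuous_on_fst[OF continuous_on_id]] by auto

lemma cont_snd: "continuous_on S (\<lambda>x::(nat\<Rightarrow>nat\<Rightarrow>real)\<times>(nat\<Rightarrow>nat\<Rightarrow>real). snd x k i)"
  using continuous_on_compose2[OF cont_coord[of UNIV k i] continuous_on_snd[OF continuous_on_id]] by auto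

definition mv :: "nat \<Rightarrow> nat \<Rightarrow> nat \<Rightarrow> real \<Rightarrow> real \<Rightarrow> real \<Rightarrow> (nat \<Rightarrow> nat \<Rightarrow> real) \<Rightarrow> (nat \<Rightarrow> nat \<Rightarrow> real)" where
  "mv j k i a b c d = (\<lambda>k' n. d k' n - (if k' = j \<and> n = i then a else 0)
      + (if k' = j \<and> n = Suc i then b else 0) - (if k' = k \<and> n = i then c else 0))"

lemma battery_diff:
  "battery alpha E p d' k m = battery alpha E p d k m +
     (\<Sum>n=1..m. alpha (other k) * (d' (other k) n - d (other k) n) - (d' k n - d k n))"
  unfolding battery_def by (simp add: sum.distrib[symmetric] algebra_simps)

lemma battery_mv_j:
  assumes "j \<in> {1,2}" "k = other j" "1 \<le> i"
  shows "battery alpha E p (mv j k i a b c d) j m = battery alpha E p d j m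
     + (if i \<le> m then a - alpha k * c else 0) - (if Suc i \<le> m then b else 0)"
proof -
  have ok: "other j = k" "j \<noteq> k" using assms by (auto simp: other_def)
  have "(\<Sum>n=1..m. alpha (other j) * (mv j k i a b c d (other j) n - d (other j) n) - (mv j k i a b c d j n - d j n))
      = (\<Sum>n=1..m. (if n = i then a - alpha k * c else 0) - (if n = Suc i then b else 0))"
    using ok by (intro sum.cong refl) (simp add: mv_def)
  also have "\<dots> = (if i \<le> m then a - alpha k * c else 0) - (if Suc i \<le> m then b else 0)"
    using assms(3) by (simp add: sum_subtractf)
  finally show ?thesis by (simp add: battery_diff[of alpha E p "mv j k i a b c d" j m d])
qed

lemma battery_mv_k:
  assumes "j \<in> {1,2}" "k = other j" "1 \<le> i"
  shows "battery alpha E p (mv j k i a b c d) k m = battery alpha E p d k m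
     - (if i \<le> m then alpha j * a - c else 0) + (if Suc i \<le> m then alpha j * b else 0)"
proof -
  have ok: "other k = j" "j \<noteq> k" using assms by (auto simp: other_def)
  have "(\<Sum>n=1..m. alpha (other k) * (mv j k i a b c d (other k) n - d (other k) n) - (mv j k i a b c d k n - d k n))
      = (\<Sum>n=1..m. (if n = Suc i then alpha j * b else 0) - (if n = i then alpha j * a - c else 0))"
    using ok by (intro sum.cong refl) (simp add: mv_def algebra_simps)
  also have "\<dots> = (if Suc i \<le> m then alpha j * b else 0) - (if i \<le> m then alpha j * a - c else 0)"
    using assms(3) by (simp add: sum_subtractf)
  finally show ?thesis by (simp add: battery_diff[of alpha E p "mv j k i a b c d" k m d])
qed

definition Phi :: "nat \<Rightarrow> (nat \<Rightarrow> nat \<Rightarrow> real) \<Rightarrow> real" where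
  "Phi N d = (\<Sum>k\<in>{1,2}. \<Sum>n=1..N. (real N + 1 - real n) * d k n)"

lemma Phi_mv:
  assumes "j \<in> {1,2}" "k = other j" "i \<in> {1..N}"
  shows "Phi N (mv j k i a b c d) = Phi N d - (real N + 1 - real i) * (a + c)
     + (if Suc i \<le> N then (real N - real i) * b else 0)"
proof -
  have ok: "j \<noteq> k" "k \<in> {1,2}" using assms by (auto simp: other_def)
  have e: "(\<Sum>n=1..N. (real N + 1 - real n) * mv j k i a b c d k' n)
     = (\<Sum>n=1..N. (real N + 1 - real n) * d k' n)
       - (if k' = j then (real N + 1 - real i) * a else 0)
       + (if k' = j \<and> Suc i \<le> N then (real N - real i) * b else 0)
       - (if k' = k then (real N + 1 - real i) * c else 0)" for k'
  proof -
    have "(\<Sum>n=1..N. (real N + 1 - real n) * mv j k i a b c d k' n)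
      = (\<Sum>n=1..N. (real N + 1 - real n) * d k' n
          - (if n = i then (if k' = j then (real N + 1 - real i) * a else 0) else 0)
          + (if n = Suc i then (if k' = j then (real N - real i) * b else 0) else 0)
          - (if n = i then (if k' = k then (real N + 1 - real i) * c else 0) else 0))"
      by (intro sum.cong) (auto simp: mv_def algebra_simps)
    also have "\<dots> = (\<Sum>n=1..N. (real N + 1 - real n) * d k' n)
       - (if k' = j then (real N + 1 - real i) * a else 0)
       + (if k' = j \<and> Suc i \<le> N then (real N - real i) * b else 0)
       - (if k' = k then (real N + 1 - real i) * c else 0)"
      using assms(3) by (simp add: sum_subtractf sum.distrib)
    finally show ?thesis .
  qed
  have "Phi N (mv j k i a b c d) = (\<Sum>k'\<in>{1,2}. (\<Sum>n=1..N. (real N + 1 - real n) * d k' n)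
       - (if k' = j then (real N + 1 - real i) * a else 0)
       + (if k' = j \<and> Suc i \<le> N then (real N - real i) * b else 0)
       - (if k' = k then (real N + 1 - real i) * c else 0))"
    unfolding Phi_def using e by simp
  also have "\<dots> = Phi N d - (real N + 1 - real i) * (a + c)
     + (if Suc i \<le> N then (real N - real i) * b else 0)"
  proof -
    have "j = 1 \<and> k = 2 \<or> j = 2 \<and> k = 1" using assms(1,2) by (auto simp: other_def)
    then show ?thesis unfolding Phi_def by (elim disjE) (simp_all add: algebra_simps)
  qed
  finally show ?thesis .
qed

lemma battery_0: "battery alpha E p d k 0 = 0"
  by (simp add: battery_def)

lemma battery_Suc: "battery alpha E p d k (Suc m) = battery alpha E p d k m +
   (E k (Suc m) - p k (Suc m) + alpha (other k) * d (other k) (Suc m) - d k (Suc m))"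
  unfolding battery_def by (simp add: sum.nat_ivl_Suc')

lemma battery_cong:
  assumes "k \<in> {1,2}" "m \<le> N"
    "\<forall>k\<in>{1,2}. \<forall>i\<in>{1..N}. p' k i = p k i \<and> d' k i = d k i"
  shows "battery alpha E p' d' k m = battery alpha E p d k m"
proof -
  have "other k \<in> {1,2}" by (auto simp: other_def)
  then show ?thesis unfolding battery_def using assms
    by (intro sum.cong) auto
qed

lemma feasible_cong:
  assumes "\<forall>k\<in>{1,2}. \<forall>i\<in>{1..N}. p' k i = p k i \<and> d' k i = d k i"
  shows "feasible N alpha E p' d' = feasible N alpha E p d"
  unfolding feasible_def using battery_cong[OF _ _ assms] assms
  by (metis atLeastAtMost_iff)

lemma feasible_mv:
  assumes f: "feasible N alpha E p d" and j: "j \<in> {1,2}" "k = other j" and i: "i \<in> {1..N}"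
    and "a \<le> d j i" "0 \<le> b" "c \<le> d k i"
    and bj: "\<And>m. m \<in> {1..N} \<Longrightarrow> 0 \<le> battery alpha E p d j m
     + (if i \<le> m then a - alpha k * c else 0) - (if Suc i \<le> m then b else 0)"
    and bk: "\<And>m. m \<in> {1..N} \<Longrightarrow> 0 \<le> battery alpha E p d k m
     - (if i \<le> m then alpha j * a - c else 0) + (if Suc i \<le> m then alpha j * b else 0)"
  shows "feasible N alpha E p (mv j k i a b c d)"
proof -
  have jk: "j \<noteq> k" "k \<in> {1,2}" using j by (auto simp: other_def)
  have i1: "1 \<le> i" using i by auto
  show ?thesis unfolding feasible_def
  proof (intro ballI conjI)
    fix k' m :: nat assume k': "k' \<in> {1,2}" and m: "m \<in> {1..N}"
    show "0 \<le> p k' m" using f k' m by (auto simp: feasible_def)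
    have "0 \<le> d k' m" using f k' m by (auto simp: feasible_def)
    then show "0 \<le> mv j k i a b c d k' m" using assms(5,6,7) jk(1) unfolding mv_def by (auto split: if_splits)
    show "0 \<le> battery alpha E p (mv j k i a b c d) k' m"
    proof (cases "k' = j")
      case True then show ?thesis using battery_mv_j[OF j i1] bj[OF m] by simp
    next
      case False then have "k' = k" using k' jk j by auto
      then show ?thesis using battery_mv_k[OF j i1] bk[OF m] by simp
    qed
  qed
qed


definition normz :: "nat \<Rightarrow> (nat \<Rightarrow> nat \<Rightarrow> real) \<Rightarrow> (nat \<Rightarrow> nat \<Rightarrow> real)" where
  "normz N f = (\<lambda>k i. if k \<in> {1,2} \<and> i \<in> {1..N} then f k i else 0)"

lemma Phi_cong:
  assumes "\<forall>k\<in>{1,2}. \<forall>i\<in>{1..N}. d' k i = d k i"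
  shows "Phi N d' = Phi N d"
  unfolding Phi_def using assms by (intro sum.cong refl) auto

lemma Phi_norm: "Phi N (normz N d) = Phi N d"
  by (rule Phi_cong) (simp add: normz_def)

lemma feas_norm: "feasible N alpha E p (normz N d) = feasible N alpha E p d"
  by (rule feasible_cong) (simp add: normz_def)

lemma Phi_ge:
  assumes "\<forall>k\<in>{1,2}. \<forall>i\<in>{1..N}. d k i \<ge> 0" "k \<in> {1,2}" "i \<in> {1..N}"
  shows "d k i \<le> Phi N d"
proof -
  have nn: "\<And>k n. k \<in> {1,2} \<Longrightarrow> n \<in> {1..N} \<Longrightarrow> 0 \<le> (real N + 1 - real n) * d k n"
    using assms(1) by (intro mult_nonneg_nonneg) auto
  have w1: "1 \<le> real N + 1 - real i" using assms(3) by auto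
  have d0: "0 \<le> d k i" using assms by auto
  have "d k i \<le> (real N + 1 - real i) * d k i"
    using mult_right_mono[OF w1 d0] by simp
  also have "\<dots> \<le> (\<Sum>n=1..N. (real N + 1 - real n) * d k n)"
    using assms(3) nn[OF assms(2)] by (intro member_le_sum) auto
  also have "\<dots> \<le> Phi N d"
    unfolding Phi_def using assms(2) nn by (intro member_le_sum[where f="\<lambda>k. \<Sum>n=1..N. (real N + 1 - real n) * d k n"] sum_nonneg) auto
  finally show ?thesis .
qed

lemma cont_Phi: "continuous_on S (Phi N)"
  unfolding Phi_def by (intro continuous_intros cont_coord)

lemma cont_battery: "continuous_on S (\<lambda>d. battery alpha E p d k i)"
  unfolding battery_def by (intro continuous_intros cont_coord)

lemma closed_feas_d: "closed {d. feasible N alpha E p d}"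
  unfolding feasible_def Ball_def
  by (intro closed_Collect_all closed_Collect_imp open_Collect_const closed_Collect_conj
      closed_Collect_le closed_Collect_const continuous_intros cont_coord cont_battery)


lemma procr_exists:
  assumes al: "\<forall>k\<in>{1,2}. 0 \<le> alpha k \<and> alpha k \<le> 1"
    and Ef: "\<forall>k\<in>{1,2}. \<forall>i\<in>{1..N}. E k i \<ge> 0"
    and f: "feasible N alpha E p d"
  shows "\<exists>d'. feasible N alpha E p d' \<and> (\<forall>k i. \<not> (k \<in> {1,2} \<and> i \<in> {1..N}) \<longrightarrow> d' k i = 0)
     \<and> (\<forall>j\<in>{1,2}. \<forall>i\<in>{1..N}. alpha j * d' j i \<le> p (other j) i \<and> (alpha j = 0 \<longrightarrow> d' j i = 0))"
proof -
  define M where "M = Phi N (normz N d)"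
  define S where "S = pbox N M \<inter> {d'. feasible N alpha E p d'}"
  have inbox: "normz N d' \<in> pbox N M" if fd: "feasible N alpha E p d'" and le: "Phi N d' \<le> M" for d'
  proof -
    have nn: "\<forall>k\<in>{1,2}. \<forall>i\<in>{1..N}. normz N d' k i \<ge> 0"
      using fd by (auto simp: feasible_def normz_def)
    have "normz N d' k i \<le> M" if "k \<in> {1,2}" "i \<in> {1..N}" for k i
      using Phi_ge[OF nn that] le Phi_norm[of N d'] by linarith
    then show ?thesis using nn unfolding pbox_def by (auto simp: normz_def)
  qed
  have dS: "normz N d \<in> S" unfolding S_def using inbox[of d] f feas_norm M_def Phi_norm by auto
  have "compact S" unfolding S_def by (intro compact_Int_closed compact_box closed_feas_d)
  moreover have "S \<noteq> {}" using dS by auto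
  ultimately obtain ds where ds: "ds \<in> S" "\<forall>y\<in>S. Phi N ds \<le> Phi N y"
    using continuous_attains_inf[of S "Phi N"] cont_Phi by blast
  have fds: "feasible N alpha E p ds" using ds(1) S_def by auto
  have minl: "Phi N ds \<le> Phi N d'" if fd: "feasible N alpha E p d'" for d'
  proof (cases "Phi N d' \<le> M")
    case True
    then have "normz N d' \<in> S" unfolding S_def using inbox[OF fd] fd feas_norm by auto
    then show ?thesis using ds(2) Phi_norm by metis
  next
    case False
    then show ?thesis using ds(2) dS Phi_norm M_def by force
  qed
  have zero: "ds k i = 0" if "\<not> (k \<in> {1,2} \<and> i \<in> {1..N})" for k i
  proof -
    have "ds k i \<in> (if k \<in> {1,2} \<and> i \<in> {1..N} then {0..M} else {0})"
      using ds(1) unfolding S_def pbox_def PiE_iff by blast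
    moreover have "\<not> (k \<in> {1,2} \<and> i \<in> {1..N})" using that .
    ultimately show ?thesis by (simp only: if_False) simp
  qed
  have main: "alpha j * ds j i \<le> p (other j) i \<and> (alpha j = 0 \<longrightarrow> ds j i = 0)"
    if j: "j \<in> {1,2}" and i: "i \<in> {1..N}" for j i
  proof -
    define k where "k = other j"
    have jk: "other j = k" "other k = j" "k \<in> {1,2}" "j \<noteq> k" using j unfolding k_def by (auto simp: other_def)
    have pk: "0 \<le> p k i" and dj: "0 \<le> ds j i" and dk: "0 \<le> ds k i"
      using fds jk j i by (auto simp: feasible_def)
    have aj: "0 \<le> alpha j" "alpha j \<le> 1" and ak: "0 \<le> alpha k" "alpha k \<le> 1" using al j jk by auto
    have bat: "\<And>m k'. k' \<in> {1,2} \<Longrightarrow> m \<in> {1..N} \<Longrightarrow> 0 \<le> battery alpha E p ds k' m"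
      using fds by (auto simp: feasible_def)
    have i1: "1 \<le> i" "i \<le> N" using i by auto
    have moveA: False if s: "0 < s" "s \<le> ds j i" "alpha j * s \<le> ds k i" for s
    proof -
      have "feasible N alpha E p (mv j k i s 0 (alpha j * s) ds)"
      proof (rule feasible_mv[OF fds j k_def i s(2) order_refl s(3)])
        fix m assume m: "m \<in> {1..N}"
        have "alpha k * (alpha j * s) \<le> 1 * s"
          using aj ak s by (intro mult_mono) (auto intro: mult_le_one)
        then show "0 \<le> battery alpha E p ds j m + (if i \<le> m then s - alpha k * (alpha j * s) else 0)
          - (if Suc i \<le> m then 0 else 0)" using bat[OF j m] by (auto simp: algebra_simps)
        show "0 \<le> battery alpha E p ds k m - (if i \<le> m then alpha j * s - alpha j * s else 0)
          + (if Suc i \<le> m then alpha j * 0 else 0)" using bat[OF jk(3) m] by auto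
      qed
      then have "Phi N ds \<le> Phi N (mv j k i s 0 (alpha j * s) ds)" by (rule minl)
      also have "\<dots> = Phi N ds - (real N + 1 - real i) * (s + alpha j * s)"
        using Phi_mv[OF j k_def i] by simp
      finally have "(real N + 1 - real i) * (s + alpha j * s) \<le> 0" by simp
      moreover have "0 < (real N + 1 - real i) * (s + alpha j * s)"
        using i1 s aj by (intro mult_pos_pos) (auto intro: add_pos_nonneg)
      ultimately show False by simp
    qed
    have c1: "alpha j = 0 \<longrightarrow> ds j i = 0"
    proof
      assume a0: "alpha j = 0"
      show "ds j i = 0"
      proof (rule ccontr)
        assume "ds j i \<noteq> 0"
        then have "0 < ds j i" using dj by simp
        then show False using moveA[of "ds j i"] a0 dk by simp
      qed
    qed
    have c2: "alpha j * ds j i \<le> p k i"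
    proof (rule ccontr)
      assume viol: "\<not> alpha j * ds j i \<le> p k i"
      then have apos: "0 < alpha j" using aj pk by (cases "alpha j = 0") auto
      show False
      proof (cases "0 < ds k i")
        case True
        define s where "s = min (ds j i) (ds k i / alpha j)"
        have "0 < ds j i" using viol pk apos by (metis mult_zero_right not_less_iff_gr_or_eq dj order.strict_iff_not) 
        then have "0 < s" using True apos by (simp add: s_def)
        moreover have "s \<le> ds j i" by (simp add: s_def)
        moreover have "alpha j * s \<le> ds k i"
          using apos by (simp add: s_def min_def field_simps)
        ultimately show False using moveA by blast
      next
        case False
        then have dk0: "ds k i = 0" using dk by simp
        define x where "x = ds j i - p k i / alpha j"
        have ax: "alpha j * x = alpha j * ds j i - p k i" using apos by (simp add: x_def field_simps)
        have xpos: "0 < x" proof -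
          have "0 < alpha j * x" using ax viol by simp
          then show ?thesis using apos by (simp add: zero_less_mult_iff)
        qed
        have xle: "x \<le> ds j i" using pk apos by (simp add: x_def)
        have bki: "alpha j * x \<le> battery alpha E p ds k i"
        proof -
          obtain i' where ii: "i = Suc i'" using i1 by (cases i) auto
          have "0 \<le> battery alpha E p ds k i'"
            using bat[OF jk(3), of i'] battery_0 ii i1 by (cases i') auto
          moreover have "0 \<le> E k i" using Ef jk i by auto
          ultimately show ?thesis using battery_Suc[of alpha E p ds k i'] ii jk dk0 ax by simp
        qed
        have "feasible N alpha E p (mv j k i x x 0 ds)"
        proof (rule feasible_mv[OF fds j k_def i xle less_imp_le[OF xpos]])
          show "0 \<le> ds k i" by (rule dk)
          fix m assume m: "m \<in> {1..N}"
          show "0 \<le> battery alpha E p ds j m + (if i \<le> m then x - alpha k * 0 else 0)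
            - (if Suc i \<le> m then x else 0)" using bat[OF j m] xpos by auto
          show "0 \<le> battery alpha E p ds k m - (if i \<le> m then alpha j * x - 0 else 0)
            + (if Suc i \<le> m then alpha j * x else 0)"
            using bat[OF jk(3) m] bki by (cases "m = i") auto
        qed
        then have "Phi N ds \<le> Phi N (mv j k i x x 0 ds)" by (rule minl)
        also have "\<dots> = Phi N ds - (real N + 1 - real i) * x
            + (if Suc i \<le> N then (real N - real i) * x else 0)"
          using Phi_mv[OF j k_def i] by simp
        also have "\<dots> < Phi N ds"
        proof (cases "Suc i \<le> N")
          case True then show ?thesis using xpos by (simp add: algebra_simps)
        next
          case False
          have "0 < (real N + 1 - real i) * x" using xpos i1 by (intro mult_pos_pos) auto
          then show ?thesis using False by simp
        qed
        finally show False by simp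
      qed
    qed
    show ?thesis using c1 c2 jk by simp
  qed
  show ?thesis using fds zero main by blast
qed


lemma in_pbox:
  assumes "\<forall>k i. \<not> (k \<in> {1,2} \<and> i \<in> {1..N}) \<longrightarrow> f k i = 0"
    "\<forall>k\<in>{1,2}. \<forall>i\<in>{1..N}. 0 \<le> f k i \<and> f k i \<le> M"
  shows "f \<in> pbox N M"
  using assms unfolding pbox_def PiE_iff by auto

lemma bound_p:
  assumes al: "\<forall>k\<in>{1,2}. 0 \<le> alpha k \<and> alpha k \<le> 1"
    and f: "feasible N alpha E p d" and k: "k \<in> {1,2}" and i: "i \<in> {1..N}"
  shows "p k i \<le> (\<Sum>k\<in>{1,2}. \<Sum>n=1..N. E k n)"
proof -
  have N: "N \<in> {1..N}" using i by auto
  have "0 \<le> battery alpha E p d 1 N + battery alpha E p d 2 N"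
    using f N by (auto simp: feasible_def intro: add_nonneg_nonneg)
  also have "battery alpha E p d 1 N + battery alpha E p d 2 N =
     (\<Sum>n=1..N. (E 1 n + E 2 n) - (p 1 n + p 2 n) - ((1 - alpha 1) * d 1 n + (1 - alpha 2) * d 2 n))"
    unfolding battery_def other_def by (simp add: sum.distrib[symmetric] algebra_simps)
  also have "\<dots> = (\<Sum>n=1..N. E 1 n + E 2 n) - (\<Sum>n=1..N. p 1 n + p 2 n)
      - (\<Sum>n=1..N. (1 - alpha 1) * d 1 n + (1 - alpha 2) * d 2 n)"
    by (simp add: sum_subtractf)
  finally have 1: "(\<Sum>n=1..N. p 1 n + p 2 n) \<le> (\<Sum>n=1..N. E 1 n + E 2 n)
      - (\<Sum>n=1..N. (1 - alpha 1) * d 1 n + (1 - alpha 2) * d 2 n)" by simp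
  have 2: "0 \<le> (\<Sum>n=1..N. (1 - alpha 1) * d 1 n + (1 - alpha 2) * d 2 n)"
    using f al by (intro sum_nonneg add_nonneg_nonneg mult_nonneg_nonneg) (auto simp: feasible_def)
  have pnn: "\<And>k n. k \<in> {1,2} \<Longrightarrow> n \<in> {1..N} \<Longrightarrow> 0 \<le> p k n" using f by (auto simp: feasible_def)
  have "p k i \<le> (\<Sum>n=1..N. p k n)" using i k pnn by (intro member_le_sum) auto
  also have "\<dots> \<le> (\<Sum>n=1..N. p 1 n + p 2 n)"
    using k pnn by (intro sum_mono) auto
  also have "\<dots> \<le> (\<Sum>n=1..N. E 1 n + E 2 n)" using 1 2 by simp
  also have "\<dots> = (\<Sum>k\<in>{1,2}. \<Sum>n=1..N. E k n)" by (simp add: sum.distrib)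
  finally show ?thesis .
qed

lemma cont_battery2: "continuous_on S (\<lambda>x. battery alpha E (fst x) (snd x) k i)"
  unfolding battery_def by (intro continuous_intros cont_fst cont_snd)

lemma closed_feas2: "closed {x. feasible N alpha E (fst x) (snd x)}"
  unfolding feasible_def Ball_def
  by (intro closed_Collect_all closed_Collect_imp open_Collect_const closed_Collect_conj
      closed_Collect_le closed_Collect_const continuous_intros cont_fst cont_snd cont_battery2)

theorem lemma1:
  fixes N :: nat and h1 h2 s1 s2 :: real
    and alpha :: "nat \<Rightarrow> real" and E :: "nat \<Rightarrow> nat \<Rightarrow> real"
  assumes "h1 > 0" "h2 > 0" "s1 > 0" "s2 > 0"
    and "\<forall>k\<in>{1,2}. 0 \<le> alpha k \<and> alpha k \<le> 1"
    and "\<forall>k\<in>{1,2}. \<forall>i\<in>{1..N}. E k i \<ge> 0"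
  shows "\<exists>p d. optimal N h1 h2 s1 s2 alpha E p d \<and> procrastinating N alpha p d"
proof -
  note al = assms(5) and Ef = assms(6)
  define B where "B = (\<Sum>k\<in>{1,2}. \<Sum>n=1..N. E k n)"
  define C where "C = (if alpha 1 = 0 then 0 else B / alpha 1) + (if alpha 2 = 0 then 0 else B / alpha 2)"
  have B0: "0 \<le> B" unfolding B_def using Ef by (intro sum_nonneg) auto
  have C0: "0 \<le> C" unfolding C_def using B0 al by (intro add_nonneg_nonneg) auto
  define Q where "Q = (pbox N B \<times> pbox N C) \<inter> {x. feasible N alpha E (fst x) (snd x)}"
  have cQ: "compact Q" unfolding Q_def
    by (intro compact_Int_closed compact_Times compact_box closed_feas2)
  define z :: "nat \<Rightarrow> nat \<Rightarrow> real" where "z = (\<lambda>_ _. 0)"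
  have zf: "feasible N alpha E z z"
    unfolding feasible_def battery_def z_def using Ef by (auto intro!: sum_nonneg)
  have zb: "z \<in> pbox N M" if "0 \<le> M" for M using that by (intro in_pbox) (auto simp: z_def)
  have "(z, z) \<in> Q" unfolding Q_def using zf zb B0 C0 by auto
  then have neQ: "Q \<noteq> {}" by auto
  have Qnn: "0 \<le> fst x k i" if "x \<in> Q" "k \<in> {1,2}" "i \<in> {1..N}" for x k i
    using that unfolding Q_def feasible_def by auto
  have coQ: "continuous_on Q (\<lambda>x. objective N h1 h2 s1 s2 (fst x))"
    unfolding objective_def rate_def
  proof (intro continuous_intros cont_fst ballI)
    fix i x assume i: "i \<in> {1..N}" and x: "x \<in> Q"
    have "0 \<le> h1 * fst x 1 i / s2" using Qnn[OF x _ i, of 1] assms by simp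
    then show "1 + h1 * fst x 1 i / s2 \<noteq> 0" by linarith
    have "0 \<le> h2 * fst x 2 i / s1" using Qnn[OF x _ i, of 2] assms by simp
    then show "1 + h2 * fst x 2 i / s1 \<noteq> 0" by linarith
  qed (use assms in auto)
  obtain xs where xs: "xs \<in> Q" "\<forall>y\<in>Q. objective N h1 h2 s1 s2 (fst y) \<le> objective N h1 h2 s1 s2 (fst xs)"
    using continuous_attains_sup[OF cQ neQ coQ] by blast
  have opt: "objective N h1 h2 s1 s2 q \<le> objective N h1 h2 s1 s2 (fst xs)"
    if fq: "feasible N alpha E q e" for q e
  proof -
    obtain e' where e': "feasible N alpha E q e'" "\<forall>k i. \<not> (k \<in> {1,2} \<and> i \<in> {1..N}) \<longrightarrow> e' k i = 0"
      "\<forall>j\<in>{1,2}. \<forall>i\<in>{1..N}. alpha j * e' j i \<le> q (other j) i \<and> (alpha j = 0 \<longrightarrow> e' j i = 0)"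
      using procr_exists[OF al Ef fq] by blast
    define q' where "q' = normz N q"
    have fq': "feasible N alpha E q' e'" using e'(1) unfolding q'_def
      by (subst feasible_cong[where p=q and d=e']) (auto simp: normz_def)
    have qb: "q' \<in> pbox N B"
    proof (intro in_pbox)
      show "\<forall>k i. \<not> (k \<in> {1,2} \<and> i \<in> {1..N}) \<longrightarrow> q' k i = 0" by (auto simp: q'_def normz_def)
      show "\<forall>k\<in>{1,2}. \<forall>i\<in>{1..N}. 0 \<le> q' k i \<and> q' k i \<le> B"
        using bound_p[OF al e'(1)] e'(1) unfolding q'_def normz_def B_def feasible_def by auto
    qed
    have eb: "e' \<in> pbox N C"
    proof (intro in_pbox)
      show "\<forall>k i. \<not> (k \<in> {1,2} \<and> i \<in> {1..N}) \<longrightarrow> e' k i = 0" using e'(2) by blast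
      show "\<forall>k\<in>{1,2}. \<forall>i\<in>{1..N}. 0 \<le> e' k i \<and> e' k i \<le> C"
      proof (intro ballI conjI)
        fix j i :: nat assume j: "j \<in> {1,2}" and i: "i \<in> {1..N}"
        show "0 \<le> e' j i" using e'(1) j i by (auto simp: feasible_def)
        have oj: "other j \<in> {1,2}" by (auto simp: other_def)
        have qB: "q (other j) i \<le> B" using bound_p[OF al e'(1) oj i] B_def by simp
        have aj: "0 \<le> alpha j" using al j by auto
        show "e' j i \<le> C"
        proof (cases "alpha j = 0")
          case True then show ?thesis using e'(3) j i C0 by auto
        next
          case False
          then have apos: "0 < alpha j" using aj by simp
          have "alpha j * e' j i \<le> B" using e'(3)[rule_format, OF j i] qB by linarith
          then have le: "e' j i \<le> B / alpha j" using apos by (simp add: field_simps mult.commute)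
          have "0 \<le> B / alpha 1" "0 \<le> B / alpha 2" using B0 al by auto
          then show ?thesis using le j False unfolding C_def by auto
        qed
      qed
    qed
    have "(q', e') \<in> Q" unfolding Q_def using qb eb fq' by auto
    then have "objective N h1 h2 s1 s2 q' \<le> objective N h1 h2 s1 s2 (fst xs)" using xs(2) by force
    moreover have "objective N h1 h2 s1 s2 q' = objective N h1 h2 s1 s2 q"
      unfolding objective_def q'_def normz_def by (intro sum.cong) auto
    ultimately show ?thesis by simp
  qed
  have fxs: "feasible N alpha E (fst xs) (snd xs)" using xs(1) Q_def by auto
  obtain d' where d': "feasible N alpha E (fst xs) d'"
      "\<forall>j\<in>{1,2}. \<forall>i\<in>{1..N}. alpha j * d' j i \<le> fst xs (other j) i \<and> (alpha j = 0 \<longrightarrow> d' j i = 0)"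
    using procr_exists[OF al Ef fxs] by blast
  have "optimal N h1 h2 s1 s2 alpha E (fst xs) d'"
    unfolding optimal_def using d'(1) opt by blast
  moreover have "procrastinating N alpha (fst xs) d'"
    unfolding procrastinating_def
  proof (intro ballI impI)
    fix k j i :: nat assume k: "k \<in> {1,2}" and j: "j \<in> {1,2}" and jk: "j \<noteq> k" and i: "i \<in> {1..N}"
    have "other j = k" using k j jk by (auto simp: other_def)
    then show "0 \<le> fst xs k i - alpha j * d' j i" using d'(2) j i by fastforce
  qed
  ultimately show ?thesis by blast
qed

end
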